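(* Let $L$ be a positive integer, let $n_1,\dots,n_L$ be integers with $1\le n_i\le L$, and put $M=\sum_{i=1}^L n_i$. Let $\mathcal P$ be the set of vectors $\mathbf p=\frac1M\sum_{i=1}^L\mathbf e_i\in\mathbb R^L$ where each $\mathbf e_i\in\{0,1\}^L$ has exactly $n_i$ ones, and let $\mathrm{conv}(\mathcal P)$ be its convex hull. Let $\mathbf e_i^\star\in\{0,1\}^L$ be the vector whose first $n_i$ components are $1$ and remaining $L-n_i$ components are $0$, and set $\mathbf p^\star=\frac1M\sum_{i=1}^L\mathbf e_i^\star$. Then $\mathbf p^\star$ is a probability mass function on $[L]$ and $$H(\mathbf p^\star)=\min_{\mathbf p\in\mathcal P}H(\mathbf p)=\min_{\mathbf p\in\mathrm{conv}(\mathcal P)}H(\mathbf p);$$ moreover every minimizer of $H$ over $\mathrm{conv}(\mathcal P)$ is a permutation of (the components of) $\mathbf p^\star$.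
   Context: $H(\mathbf p)=-\sum_i\mathbf p(i)\log_2\mathbf p(i)$ is the Shannon entropy (with $0\log0=0$). In the paper, $L=2^{x+y}$, $M=3^{x+y}$ and the $n_i$ are the sizes of the classes of input triples with a given arithmetic sum, grouped by the value of the third input; $\mathbf p^\star$ is called the "clumpy" distribution. *)

theory Defs
  imports "HOL-Analysis.Analysis"
begin

text \<open>Vectors in R^L are represented as functions nat => real, components indexed by 1..L
  (and zero outside {1..L}).\<close>

definition entropy :: "nat \<Rightarrow> (nat \<Rightarrow> real) \<Rightarrow> real" where
  "entropy L p = - (\<Sum>j\<in>{1..L}. (if p j = 0 then 0 else p j * log 2 (p j)))"

definition conv_hull :: "(nat \<Rightarrow> real) set \<Rightarrow> (nat \<Rightarrow> real) set" where
  "conv_hull S = {q. \<exists>F c. finite F \<and> F \<noteq> {} \<and> F \<subseteq> S \<and> (\<forall>p\<in>F. 0 \<le> c p) \<and>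
      sum c F = 1 \<and> q = (\<lambda>j. \<Sum>p\<in>F. c p * p j)}"

definition Pset :: "nat \<Rightarrow> (nat \<Rightarrow> nat) \<Rightarrow> (nat \<Rightarrow> real) set" where
  "Pset L n = {(\<lambda>j. (\<Sum>i\<in>{1..L}. indicator (S i) j) / real (\<Sum>i\<in>{1..L}. n i)) | S.
      \<forall>i\<in>{1..L}. S i \<subseteq> {1..L} \<and> card (S i) = n i}"

definition pstar :: "nat \<Rightarrow> (nat \<Rightarrow> nat) \<Rightarrow> (nat \<Rightarrow> real)" where
  "pstar L n = (\<lambda>j. (\<Sum>i\<in>{1..L}. indicator {1..n i} j) / real (\<Sum>i\<in>{1..L}. n i))"

end

theory Submission
  imports Defs "HOL-Combinatorics.Permutations"
begin

definition phi :: "real \<Rightarrow> real" where "phi x = (if x = 0 then 0 else x * ln x)"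

lemma ln_strict: "0 < (x::real) \<Longrightarrow> x \<noteq> 1 \<Longrightarrow> ln x < x - 1"
  by (smt (verit) ln_eq_minus_one ln_le_minus_one)

lemma tangent:
  assumes z: "z > 0" and w: "w \<ge> 0"
  shows "phi w \<ge> phi z + (ln z + 1) * (w - z)"
    and "w \<noteq> z \<Longrightarrow> phi w > phi z + (ln z + 1) * (w - z)"
proof -
  have key: "phi w - (phi z + (ln z + 1) * (w - z)) \<ge> 0 \<and> (w \<noteq> z \<longrightarrow> phi w - (phi z + (ln z + 1) * (w - z)) > 0)"
  proof (cases "w = 0")
    case True then show ?thesis using z by (simp add: phi_def algebra_simps)
  next
    case False
    then have wp: "w > 0" using w by simp
    have e: "phi w - (phi z + (ln z + 1) * (w - z)) = z - w - w * ln (z / w)"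
      using wp z by (simp add: phi_def ln_div algebra_simps)
    have "ln (z/w) \<le> z/w - 1" using wp z by (simp add: ln_le_minus_one)
    then have "w * ln (z/w) \<le> w * (z/w - 1)" using wp by (simp add: mult_left_mono)
    also have "\<dots> = z - w" using wp by (simp add: field_simps)
    finally have 1: "w * ln (z/w) \<le> z - w" .
    have 2: "w * ln (z/w) < z - w" if "w \<noteq> z"
    proof -
      have "z/w \<noteq> 1" using that wp by simp
      then have "ln (z/w) < z/w - 1" using wp z by (simp add: ln_strict)
      then have "w * ln (z/w) < w * (z/w - 1)" using wp by simp
      also have "\<dots> = z - w" using wp by (simp add: field_simps)
      finally show ?thesis .
    qed
    show ?thesis using e 1 2 by auto
  qed
  then show "phi w \<ge> phi z + (ln z + 1) * (w - z)" by linarith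
  show "w \<noteq> z \<Longrightarrow> phi w > phi z + (ln z + 1) * (w - z)" using key by linarith
qed

lemma keyK:
  assumes s: "s \<ge> 0" and h: "h > 0" and t: "t \<ge> s + h"
  shows "phi (s + h) - phi s < phi (t + h) - phi t"
proof -
  have "phi s > phi (s+h) + (ln (s+h) + 1) * (s - (s+h))"
    using tangent(2)[of "s+h" s] s h by simp
  then have 1: "phi (s+h) - phi s < (ln (s+h) + 1) * h" by (simp add: algebra_simps)
  have "phi (t+h) \<ge> phi t + (ln t + 1) * ((t+h) - t)"
    using tangent(1)[of t "t+h"] s h t by simp
  then have 2: "phi (t+h) - phi t \<ge> (ln t + 1) * h" by simp
  have "ln (s+h) \<le> ln t" using s h t by simp
  then have "(ln (s+h) + 1) * h \<le> (ln t + 1) * h" using h by simp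
  then show ?thesis using 1 2 by linarith
qed

lemma jensen:
  assumes F: "finite F" and c: "\<forall>p\<in>F. 0 \<le> c p" and c1: "sum c F = 1"
    and w: "\<forall>p\<in>F. 0 \<le> w p"
  shows "phi (\<Sum>p\<in>F. c p * w p) \<le> (\<Sum>p\<in>F. c p * phi (w p))"
    and "phi (\<Sum>p\<in>F. c p * w p) = (\<Sum>p\<in>F. c p * phi (w p)) \<Longrightarrow>
          \<forall>p\<in>F. c p > 0 \<longrightarrow> w p = (\<Sum>p\<in>F. c p * w p)"
proof -
  define z where "z = (\<Sum>p\<in>F. c p * w p)"
  have z0: "z \<ge> 0" unfolding z_def using c w by (simp add: sum_nonneg)
  have "phi z \<le> (\<Sum>p\<in>F. c p * phi (w p)) \<and> (phi z = (\<Sum>p\<in>F. c p * phi (w p)) \<longrightarrow>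
          (\<forall>p\<in>F. c p > 0 \<longrightarrow> w p = z))"
  proof (cases "z = 0")
    case True
    have "\<forall>p\<in>F. c p * w p = 0"
      using sum_nonneg_eq_0_iff[OF F, of "\<lambda>p. c p * w p"] c w True unfolding z_def by auto
    then have "\<forall>p\<in>F. c p * phi (w p) = 0" by (auto simp: phi_def)
    then have "(\<Sum>p\<in>F. c p * phi (w p)) = 0" by (intro sum.neutral) blast
    then show ?thesis using True \<open>\<forall>p\<in>F. c p * w p = 0\<close> by (auto simp: phi_def)
  next
    case False
    then have zp: "z > 0" using z0 by simp
    define d where "d = ln z + 1"
    define g where "g p = c p * phi (w p) - c p * (phi z + d * (w p - z))" for p
    have g0: "\<forall>p\<in>F. g p \<ge> 0" unfolding g_def d_def
      using tangent(1)[OF zp] c w by (simp add: mult_left_mono flip: right_diff_distrib)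
    have "(\<Sum>p\<in>F. c p * (phi z + d * (w p - z))) = (\<Sum>p\<in>F. (phi z - d*z) * c p + d * (c p * w p))"
      by (rule sum.cong) (simp_all add: algebra_simps)
    also have "\<dots> = (phi z - d*z) * sum c F + d * z"
      unfolding z_def by (simp add: sum.distrib sum_distrib_left)
    also have "\<dots> = phi z" using c1 by simp
    finally have s: "(\<Sum>p\<in>F. c p * (phi z + d * (w p - z))) = phi z" .
    have gs: "sum g F = (\<Sum>p\<in>F. c p * phi (w p)) - phi z"
      unfolding g_def using s by (simp add: sum_subtractf)
    have "sum g F \<ge> 0" using g0 by (simp add: sum_nonneg)
    moreover have "\<forall>p\<in>F. c p > 0 \<longrightarrow> w p = z" if eq: "phi z = (\<Sum>p\<in>F. c p * phi (w p))"
    proof (intro ballI impI)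
      fix p assume p: "p \<in> F" "c p > 0"
      have "sum g F = 0" using gs eq by simp
      then have "g p = 0" using sum_nonneg_eq_0_iff[OF F] g0 p by auto
      show "w p = z"
      proof (rule ccontr)
        assume "w p \<noteq> z"
        then have "phi (w p) > phi z + d * (w p - z)" using tangent(2)[OF zp] w p d_def by auto
        then have "g p > 0" unfolding g_def using p by (simp flip: right_diff_distrib)
        then show False using \<open>g p = 0\<close> by simp
      qed
    qed
    ultimately show ?thesis using gs by auto
  qed
  then show "phi (\<Sum>p\<in>F. c p * w p) \<le> (\<Sum>p\<in>F. c p * phi (w p))"
    and "phi (\<Sum>p\<in>F. c p * w p) = (\<Sum>p\<in>F. c p * phi (w p)) \<Longrightarrow>
          \<forall>p\<in>F. c p > 0 \<longrightarrow> w p = (\<Sum>p\<in>F. c p * w p)" unfolding z_def by auto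
qed



definition cn :: "nat \<Rightarrow> (nat \<Rightarrow> nat set) \<Rightarrow> nat \<Rightarrow> nat" where
  "cn L S j = card {i\<in>{1..L}. j \<in> S i}"

definition pS :: "nat \<Rightarrow> (nat \<Rightarrow> nat) \<Rightarrow> (nat \<Rightarrow> nat set) \<Rightarrow> nat \<Rightarrow> real" where
  "pS L n S = (\<lambda>j. (\<Sum>i\<in>{1..L}. indicator (S i) j) / real (\<Sum>i\<in>{1..L}. n i))"

definition EE :: "nat \<Rightarrow> (nat \<Rightarrow> real) \<Rightarrow> real" where
  "EE L p = (\<Sum>j\<in>{1..L}. phi (p j))"

lemma cnt_eq: "(\<Sum>i\<in>{1..L}. indicator (S i) j :: real) = real (cn L S j)"
proof -
  have "(\<Sum>i\<in>{1..L}. indicator (S i) j :: real) = (\<Sum>i\<in>{1..L}. of_bool (j \<in> S i))"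
    by (simp add: indicator_def)
  also have "\<dots> = real (card ({1..L} \<inter> {i. j \<in> S i}))" by simp
  also have "{1..L} \<inter> {i. j \<in> S i} = {i\<in>{1..L}. j \<in> S i}" by auto
  finally show ?thesis unfolding cn_def .
qed

lemma pS_cn: "pS L n S x = real (cn L S x) / real (\<Sum>i\<in>{1..L}. n i)"
  unfolding pS_def cnt_eq ..

lemma entropy_EE: "entropy L p = - EE L p / ln 2"
proof -
  have "(\<Sum>j\<in>{1..L}. if p j = 0 then 0 else p j * log 2 (p j)) = (\<Sum>j\<in>{1..L}. phi (p j) / ln 2)"
    by (rule sum.cong) (auto simp: phi_def log_def)
  then show ?thesis unfolding entropy_def EE_def by (simp add: sum_divide_distrib)
qed

lemma sum_split2:
  fixes f :: "'a \<Rightarrow> 'b::comm_monoid_add"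
  assumes "finite I" "j \<in> I" "j' \<in> I" "j \<noteq> j'"
  shows "sum f I = f j + f j' + sum f (I - {j, j'})"
proof -
  have "sum f I = f j + sum f (I - {j})" using assms by (simp add: sum.remove)
  also have "sum f (I - {j}) = f j' + sum f (I - {j} - {j'})"
    using assms by (intro sum.remove) auto
  also have "I - {j} - {j'} = I - {j, j'}" by auto
  finally show ?thesis by (simp add: add.assoc)
qed

lemma EE_perm: "\<sigma> permutes {1..L} \<Longrightarrow> EE L (p \<circ> \<sigma>) = EE L p"
  unfolding EE_def using sum.permute[of \<sigma> "{1..L}" "\<lambda>j. phi (p j)"] by (simp add: comp_def)

lemma cn_le: "cn L S x \<le> L"
proof -
  have "cn L S x \<le> card {1..L}" unfolding cn_def by (intro card_mono) auto
  then show ?thesis by simp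
qed


lemma final_perm:
  assumes hn: "\<forall>i\<in>{1..L}. n i \<le> L"
    and V: "\<forall>i\<in>{1..L}. S i \<subseteq> {1..L} \<and> card (S i) = n i"
    and fin: "\<forall>i\<in>{1..L}. \<forall>j\<in>S i. \<forall>j'\<in>{1..L} - S i. cn L S j' < cn L S j"
  shows "\<exists>\<sigma>. \<sigma> permutes {1..L} \<and> pS L n S = pstar L n \<circ> \<sigma>"
proof -
  define c where "c = cn L S"
  define prec where "prec x y \<longleftrightarrow> c y < c x \<or> (c x = c y \<and> x < y)" for x y
  define rk where "rk y = Suc (card {x\<in>{1..L}. prec x y})" for y
  define \<sigma> where "\<sigma> y = (if y \<in> {1..L} then rk y else y)" for y
  have irr: "\<not> prec x x" for x unfolding prec_def by simp
  have tr: "prec x z" if "prec x y" "prec y z" for x y z using that unfolding prec_def by auto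
  have tot: "prec x y \<or> prec y x" if "x \<noteq> y" for x y using that unfolding prec_def by auto
  have rk_range: "rk y \<in> {1..L}" if y: "y \<in> {1..L}" for y
  proof -
    have "{x\<in>{1..L}. prec x y} \<subseteq> {1..L} - {y}" using irr by auto
    then have "card {x\<in>{1..L}. prec x y} \<le> card ({1..L} - {y})" by (intro card_mono) auto
    also have "\<dots> = L - 1" using y by simp
    finally show ?thesis unfolding rk_def using y by auto
  qed
  have rk_less: "rk x < rk y" if "x \<in> {1..L}" "prec x y" for x y
  proof -
    have "insert x {z\<in>{1..L}. prec z x} \<subseteq> {z\<in>{1..L}. prec z y}" using that tr by auto
    then have "card (insert x {z\<in>{1..L}. prec z x}) \<le> card {z\<in>{1..L}. prec z y}"
      by (intro card_mono) auto
    moreover have "card (insert x {z\<in>{1..L}. prec z x}) = Suc (card {z\<in>{1..L}. prec z x})"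
      using irr by (intro card_insert_disjoint) auto
    ultimately show ?thesis unfolding rk_def by simp
  qed
  have inj: "inj_on \<sigma> {1..L}"
  proof (rule inj_onI)
    fix x y assume xy: "x \<in> {1..L}" "y \<in> {1..L}" "\<sigma> x = \<sigma> y"
    show "x = y"
    proof (rule ccontr)
      assume "x \<noteq> y"
      then have "prec x y \<or> prec y x" by (rule tot)
      then have "rk x \<noteq> rk y" using rk_less xy by (metis less_irrefl)
      then show False using xy unfolding \<sigma>_def by simp
    qed
  qed
  have img: "\<sigma> ` {1..L} \<subseteq> {1..L}" using rk_range unfolding \<sigma>_def by auto
  have "\<sigma> ` {1..L} = {1..L}" using endo_inj_surj[OF _ img inj] by simp
  then have "bij_betw \<sigma> {1..L} {1..L}" using inj by (simp add: bij_betw_def)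
  then have perm: "\<sigma> permutes {1..L}" by (rule bij_imp_permutes) (auto simp: \<sigma>_def)
  have mem: "y \<in> S i \<longleftrightarrow> rk y \<le> n i" if i: "i \<in> {1..L}" and y: "y \<in> {1..L}" for i y
  proof
    assume yS: "y \<in> S i"
    have fS: "finite (S i)" using V i finite_subset by blast
    have "{x\<in>{1..L}. prec x y} \<subseteq> S i - {y}"
    proof
      fix x assume x: "x \<in> {x\<in>{1..L}. prec x y}"
      have "x \<in> S i"
      proof (rule ccontr)
        assume "x \<notin> S i"
        then have "c x < c y" using fin i yS x unfolding c_def by auto
        then show False using x unfolding prec_def by auto
      qed
      then show "x \<in> S i - {y}" using x irr by auto
    qed
    then have "card {x\<in>{1..L}. prec x y} \<le> card (S i - {y})" using fS by (intro card_mono) auto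
    also have "\<dots> = n i - 1" using yS V i fS by simp
    finally have "card {x\<in>{1..L}. prec x y} \<le> n i - 1" .
    moreover have "n i \<ge> 1" using yS V i fS
      by (metis One_nat_def Suc_leI card_gt_0_iff empty_iff)
    ultimately show "rk y \<le> n i" unfolding rk_def by simp
  next
    assume r: "rk y \<le> n i"
    show "y \<in> S i"
    proof (rule ccontr)
      assume yS: "y \<notin> S i"
      have "S i \<subseteq> {x\<in>{1..L}. prec x y}"
      proof
        fix x assume x: "x \<in> S i"
        then have "c y < c x" using fin i y yS unfolding c_def by auto
        moreover have "x \<in> {1..L}" using x V i by blast
        ultimately show "x \<in> {x\<in>{1..L}. prec x y}" unfolding prec_def by auto
      qed
      then have "card (S i) \<le> card {x\<in>{1..L}. prec x y}" by (intro card_mono) auto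
      then show False using r V i unfolding rk_def by auto
    qed
  qed
  have "pS L n S = pstar L n \<circ> \<sigma>"
  proof
    fix y
    show "pS L n S y = (pstar L n \<circ> \<sigma>) y"
    proof (cases "y \<in> {1..L}")
      case True
      have "(\<Sum>i\<in>{1..L}. indicator (S i) y :: real) = (\<Sum>i\<in>{1..L}. indicator {1..n i} (rk y))"
        using mem True rk_range[OF True] by (intro sum.cong) (auto simp: indicator_def)
      then show ?thesis using True unfolding pS_def pstar_def \<sigma>_def by simp
    next
      case False
      have "(\<Sum>i\<in>{1..L}. indicator (S i) y :: real) = 0"
        using V False by (intro sum.neutral) (force simp: indicator_def)
      moreover have "(\<Sum>i\<in>{1..L}. indicator {1..n i} y :: real) = 0"
        using hn False by (intro sum.neutral) (auto simp: indicator_def)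
      moreover have "\<sigma> y = y" using False unfolding \<sigma>_def by auto
      ultimately show ?thesis unfolding pS_def pstar_def by simp
    qed
  qed
  then show ?thesis using perm by blast
qed


lemma move:
  assumes V: "\<forall>i\<in>{1..L}. S i \<subseteq> {1..L} \<and> card (S i) = n i"
    and Mp: "0 < (\<Sum>i\<in>{1..L}. n i)"
    and i0: "i0 \<in> {1..L}" and j: "j \<in> S i0" and j': "j' \<in> {1..L}" "j' \<notin> S i0"
    and le: "cn L S j \<le> cn L S j'"
  defines "S' \<equiv> S(i0 := insert j' (S i0 - {j}))"
  shows "\<forall>i\<in>{1..L}. S' i \<subseteq> {1..L} \<and> card (S' i) = n i"
    and "(\<Sum>x\<in>{1..L}. (cn L S x)^2) < (\<Sum>x\<in>{1..L}. (cn L S' x)^2)"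
    and "EE L (pS L n S) < EE L (pS L n S')"
proof -
  have jI: "j \<in> {1..L}" using V i0 j by blast
  have jj: "j \<noteq> j'" using j j' by auto
  have fS: "finite (S i0)" using V i0 finite_subset by blast
  show "\<forall>i\<in>{1..L}. S' i \<subseteq> {1..L} \<and> card (S' i) = n i"
  proof
    fix i assume i: "i \<in> {1..L}"
    show "S' i \<subseteq> {1..L} \<and> card (S' i) = n i"
    proof (cases "i = i0")
      case True
      have "card (insert j' (S i0 - {j})) = Suc (card (S i0 - {j}))"
        using fS j' by (intro card_insert_disjoint) auto
      also have "\<dots> = card (S i0)" using fS j
        by (metis card_Diff1_less card_Suc_Diff1 less_nat_zero_code)
      finally show ?thesis using True V i0 j' unfolding S'_def by auto
    next
      case False
      then show ?thesis using V i unfolding S'_def by auto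
    qed
  qed
  have A1: "{i\<in>{1..L}. j \<in> S' i} = {i\<in>{1..L}. j \<in> S i} - {i0}"
    using jj unfolding S'_def by auto
  have A2: "{i\<in>{1..L}. j' \<in> S' i} = insert i0 {i\<in>{1..L}. j' \<in> S i}"
    using i0 unfolding S'_def by auto
  have A3: "{i\<in>{1..L}. x \<in> S' i} = {i\<in>{1..L}. x \<in> S i}" if "x \<noteq> j" "x \<noteq> j'" for x
    using that unfolding S'_def by auto
  define a where "a = cn L S j"
  define b where "b = cn L S j'"
  have "i0 \<in> {i\<in>{1..L}. j \<in> S i}" using i0 j by simp
  then have "0 < card {i\<in>{1..L}. j \<in> S i}" by (subst card_gt_0_iff) auto
  then have a1: "a \<ge> 1" unfolding a_def cn_def by simp
  have c1: "cn L S' j = a - 1" unfolding cn_def a_def A1 using i0 j by simp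
  have c2: "cn L S' j' = b + 1" unfolding cn_def b_def A2 using j' by simp
  have c3: "cn L S' x = cn L S x" if "x \<noteq> j" "x \<noteq> j'" for x unfolding cn_def using A3 that by simp
  have ab: "a \<le> b" using le unfolding a_def b_def .
  have rest: "(\<Sum>x\<in>{1..L} - {j, j'}. f (cn L S' x)) = (\<Sum>x\<in>{1..L} - {j, j'}. f (cn L S x))" for f :: "nat \<Rightarrow> 'b::comm_monoid_add"
    using c3 by (intro sum.cong) auto
  have sp: "(\<Sum>x\<in>{1..L}. g x) = g j + g j' + (\<Sum>x\<in>{1..L} - {j, j'}. g x)" for g :: "nat \<Rightarrow> 'b::comm_monoid_add"
    using jI j' jj by (intro sum_split2) auto
  have "(\<Sum>x\<in>{1..L}. (cn L S x)^2) = a^2 + b^2 + (\<Sum>x\<in>{1..L} - {j, j'}. (cn L S x)^2)"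
    using sp[of "\<lambda>x. (cn L S x)^2"] unfolding a_def b_def .
  moreover have "(\<Sum>x\<in>{1..L}. (cn L S' x)^2) = (a-1)^2 + (b+1)^2 + (\<Sum>x\<in>{1..L} - {j, j'}. (cn L S x)^2)"
    using sp[of "\<lambda>x. (cn L S' x)^2"] rest[of "\<lambda>k. k^2"] c1 c2 by simp
  moreover have "a^2 + b^2 < (a-1)^2 + (b+1)^2"
  proof -
    obtain a' where "a = Suc a'" using a1 by (cases a) auto
    then show ?thesis using ab by (simp add: power2_eq_square algebra_simps)
  qed
  ultimately show "(\<Sum>x\<in>{1..L}. (cn L S x)^2) < (\<Sum>x\<in>{1..L}. (cn L S' x)^2)" by simp
  define M where "M = real (\<Sum>i\<in>{1..L}. n i)"
  have M0: "M > 0" using Mp unfolding M_def by (simp only: of_nat_0_less_iff)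
  define f where "f k = phi (real k / M)" for k
  have E1: "EE L (pS L n S) = f a + f b + (\<Sum>x\<in>{1..L} - {j, j'}. f (cn L S x))"
    unfolding EE_def pS_cn using sp[of "\<lambda>x. f (cn L S x)"] unfolding a_def b_def f_def M_def .
  have E2: "EE L (pS L n S') = f (a-1) + f (b+1) + (\<Sum>x\<in>{1..L} - {j, j'}. f (cn L S x))"
    unfolding EE_def pS_cn using sp[of "\<lambda>x. f (cn L S' x)"] rest[of f] c1 c2 unfolding f_def M_def
    by simp
  have "phi ((real (a-1)/M) + 1/M) - phi (real (a-1)/M) < phi (real b / M + 1/M) - phi (real b / M)"
    using M0 a1 ab by (intro keyK) (auto simp: divide_simps of_nat_diff)
  moreover have "real (a-1)/M + 1/M = real a / M" using a1 by (simp add: of_nat_diff add_divide_distrib[symmetric])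
  moreover have "real b/M + 1/M = real (b+1) / M" by (simp add: add_divide_distrib[symmetric])
  ultimately have "f a - f (a-1) < f (b+1) - f b" unfolding f_def by simp
  then show "EE L (pS L n S) < EE L (pS L n S')" using E1 E2 by simp
qed


lemma mainP:
  assumes hn: "\<forall>i\<in>{1..L}. 1 \<le> n i \<and> n i \<le> L" and L1: "L \<ge> 1"
  shows "\<forall>i\<in>{1..L}. S i \<subseteq> {1..L} \<and> card (S i) = n i \<Longrightarrow>
    EE L (pS L n S) \<le> EE L (pstar L n) \<and>
    (EE L (pS L n S) = EE L (pstar L n) \<longrightarrow> (\<exists>\<sigma>. \<sigma> permutes {1..L} \<and> pS L n S = pstar L n \<circ> \<sigma>))"
proof (induction S rule: measure_induct_rule[where f="\<lambda>S. L^3 - (\<Sum>x\<in>{1..L}. (cn L S x)^2)"])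
  case (less S)
  have "n 1 \<le> (\<Sum>i\<in>{1..L}. n i)" using L1 by (intro member_le_sum) auto
  moreover have "n 1 \<ge> 1" using hn L1 by auto
  ultimately have Mp: "0 < (\<Sum>i\<in>{1..L}. n i)" by simp
  show ?case
  proof (cases "\<forall>i\<in>{1..L}. \<forall>j\<in>S i. \<forall>j'\<in>{1..L} - S i. cn L S j' < cn L S j")
    case True
    then obtain \<sigma> where \<sigma>: "\<sigma> permutes {1..L}" "pS L n S = pstar L n \<circ> \<sigma>"
      using final_perm[of L n S] hn less.prems by auto
    then have "EE L (pS L n S) = EE L (pstar L n)" using EE_perm by metis
    then show ?thesis using \<sigma>(1) \<sigma>(2) by (intro conjI impI exI[of _ \<sigma>]) (simp_all add: comp_def)
  next
    case False
    then obtain i0 j j' where i0: "i0 \<in> {1..L}" and j: "j \<in> S i0" and j': "j' \<in> {1..L}" "j' \<notin> S i0"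
      and le: "cn L S j \<le> cn L S j'" by (auto simp: not_less)
    define S' where "S' = S(i0 := insert j' (S i0 - {j}))"
    note mv = move[OF less.prems Mp i0 j j' le, folded S'_def]
    have "(\<Sum>x\<in>{1..L}. (cn L S' x)^2) \<le> (\<Sum>x\<in>{1..L}. L^2)"
      using cn_le by (intro sum_mono power_mono) auto
    also have "\<dots> = L^3" by (simp add: power3_eq_cube power2_eq_square)
    finally have "L^3 - (\<Sum>x\<in>{1..L}. (cn L S' x)^2) < L^3 - (\<Sum>x\<in>{1..L}. (cn L S x)^2)"
      using mv(2) by linarith
    then have "EE L (pS L n S') \<le> EE L (pstar L n)" using less.IH mv(1) by blast
    then show ?thesis using mv(3) by simp
  qed
qed

lemma pstar_eq: "pstar L n = pS L n (\<lambda>i. {1..n i})"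
  by (simp add: pstar_def pS_def)

lemma Pset_iff: "p \<in> Pset L n \<longleftrightarrow> (\<exists>S. (\<forall>i\<in>{1..L}. S i \<subseteq> {1..L} \<and> card (S i) = n i) \<and> p = pS L n S)"
  unfolding Pset_def pS_def by auto

lemma Pset_nonneg: "p \<in> Pset L n \<Longrightarrow> 0 \<le> p j"
  unfolding Pset_def by (auto intro!: sum_nonneg divide_nonneg_nonneg)

lemma Pset_out: "p \<in> Pset L n \<Longrightarrow> j \<notin> {1..L} \<Longrightarrow> p j = 0"
  unfolding Pset_def by (force simp: indicator_def intro!: sum.neutral)

lemma Pset_main:
  assumes hn: "\<forall>i\<in>{1..L}. 1 \<le> n i \<and> n i \<le> L" and L1: "L \<ge> 1" and p: "p \<in> Pset L n"
  shows "EE L p \<le> EE L (pstar L n) \<and>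
    (EE L p = EE L (pstar L n) \<longrightarrow> (\<exists>\<sigma>. \<sigma> permutes {1..L} \<and> p = pstar L n \<circ> \<sigma>))"
  using p mainP[OF hn L1] unfolding Pset_iff by blast

lemma conv_main:
  assumes hn: "\<forall>i\<in>{1..L}. 1 \<le> n i \<and> n i \<le> L" and L1: "L \<ge> 1" and q: "q \<in> conv_hull (Pset L n)"
  shows "EE L q \<le> EE L (pstar L n) \<and>
    (EE L q = EE L (pstar L n) \<longrightarrow> (\<exists>\<sigma>. \<sigma> permutes {1..L} \<and> q = pstar L n \<circ> \<sigma>))"
proof -
  obtain F c where F: "finite F" "F \<noteq> {}" "F \<subseteq> Pset L n" and c: "\<forall>p\<in>F. 0 \<le> c p"
    and c1: "sum c F = 1" and qd: "q = (\<lambda>j. \<Sum>p\<in>F. c p * p j)"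
    using q unfolding conv_hull_def by blast
  have nn: "\<forall>p\<in>F. 0 \<le> p j" for j using F Pset_nonneg by blast
  define A where "A j = (\<Sum>p\<in>F. c p * phi (p j))" for j
  have J: "phi (q j) \<le> A j" for j unfolding qd A_def using jensen(1)[OF F(1) c c1 nn] by simp
  have Ep: "EE L p \<le> EE L (pstar L n)" if "p \<in> F" for p using Pset_main[OF hn L1] F that by blast
  have "EE L q \<le> (\<Sum>j\<in>{1..L}. A j)" unfolding EE_def using J by (intro sum_mono) auto
  also have "(\<Sum>j\<in>{1..L}. A j) = (\<Sum>p\<in>F. c p * EE L p)"
    unfolding A_def EE_def by (simp add: sum_distrib_left) (rule sum.swap)
  also have "\<dots> \<le> (\<Sum>p\<in>F. c p * EE L (pstar L n))" using Ep c by (intro sum_mono mult_left_mono) auto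
  also have "\<dots> = EE L (pstar L n)" using c1 by (simp flip: sum_distrib_right)
  finally have le: "EE L q \<le> EE L (pstar L n)" .
  have SA: "(\<Sum>j\<in>{1..L}. A j) \<le> EE L (pstar L n)"
    using \<open>(\<Sum>j\<in>{1..L}. A j) = (\<Sum>p\<in>F. c p * EE L p)\<close>
      \<open>(\<Sum>p\<in>F. c p * EE L p) \<le> (\<Sum>p\<in>F. c p * EE L (pstar L n))\<close>
      \<open>(\<Sum>p\<in>F. c p * EE L (pstar L n)) = EE L (pstar L n)\<close> by linarith
  have "\<exists>\<sigma>. \<sigma> permutes {1..L} \<and> q = pstar L n \<circ> \<sigma>" if eq: "EE L q = EE L (pstar L n)"
  proof -
    have "(\<Sum>j\<in>{1..L}. A j - phi (q j)) = (\<Sum>j\<in>{1..L}. A j) - EE L q"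
      unfolding EE_def by (simp add: sum_subtractf)
    also have "\<dots> \<le> 0" using SA eq by simp
    finally have "(\<Sum>j\<in>{1..L}. A j - phi (q j)) \<le> 0" .
    moreover have "(\<Sum>j\<in>{1..L}. A j - phi (q j)) \<ge> 0" using J by (intro sum_nonneg) (simp add: algebra_simps)
    ultimately have "(\<Sum>j\<in>{1..L}. A j - phi (q j)) = 0" by simp
    then have "\<forall>j\<in>{1..L}. A j - phi (q j) = 0"
      using sum_nonneg_eq_0_iff[of "{1..L}" "\<lambda>j. A j - phi (q j)"] J by (simp add: algebra_simps)
    then have eqj: "\<forall>p\<in>F. c p > 0 \<longrightarrow> p j = q j" if "j \<in> {1..L}" for j
      using jensen(2)[OF F(1) c c1 nn, of j] that unfolding A_def qd by simp
    obtain p0 where p0: "p0 \<in> F" "c p0 > 0"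
    proof (rule ccontr)
      assume "\<not> thesis"
      then have "\<forall>p\<in>F. c p = 0" using that c by force
      then show False using c1 by simp
    qed
    have "q = p0"
    proof
      fix j show "q j = p0 j"
      proof (cases "j \<in> {1..L}")
        case True then show ?thesis using eqj p0 by simp
      next
        case False
        have "q j = 0" unfolding qd using F Pset_out[OF _ False] by (intro sum.neutral) auto
        moreover have "p0 j = 0" using F p0 Pset_out[OF _ False] by auto
        ultimately show ?thesis by simp
      qed
    qed
    then show ?thesis using Pset_main[OF hn L1, of p0] F p0 eq by auto
  qed
  then show ?thesis using le by blast
qed


theorem theorem1:
  fixes L :: nat and n :: "nat \<Rightarrow> nat"
  assumes "L \<ge> 1"
    and "\<forall>i\<in>{1..L}. 1 \<le> n i \<and> n i \<le> L"
  shows "(\<forall>j\<in>{1..L}. 0 \<le> pstar L n j) \<and> (\<Sum>j\<in>{1..L}. pstar L n j) = 1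
    \<and> entropy L (pstar L n) \<in> entropy L ` Pset L n
    \<and> (\<forall>p\<in>Pset L n. entropy L (pstar L n) \<le> entropy L p)
    \<and> entropy L (pstar L n) \<in> entropy L ` conv_hull (Pset L n)
    \<and> (\<forall>p\<in>conv_hull (Pset L n). entropy L (pstar L n) \<le> entropy L p)
    \<and> (\<forall>q\<in>conv_hull (Pset L n). entropy L q = entropy L (pstar L n) \<longrightarrow>
         (\<exists>\<sigma>. \<sigma> permutes {1..L} \<and> q = pstar L n \<circ> \<sigma>))"
proof -
  note L1 = assms(1) and hn = assms(2)
  have "n 1 \<le> (\<Sum>i\<in>{1..L}. n i)" using L1 by (intro member_le_sum) auto
  moreover have "n 1 \<ge> 1" using hn L1 by auto
  ultimately have Mp: "0 < (\<Sum>i\<in>{1..L}. n i)" by simp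
  have nn: "\<forall>j\<in>{1..L}. 0 \<le> pstar L n j"
    unfolding pstar_def by (auto intro!: sum_nonneg divide_nonneg_nonneg)
  have "(\<Sum>j\<in>{1..L}. pstar L n j) = (\<Sum>j\<in>{1..L}. \<Sum>i\<in>{1..L}. indicator {1..n i} j) / real (\<Sum>i\<in>{1..L}. n i)"
    unfolding pstar_def by (simp add: sum_divide_distrib)
  also have "(\<Sum>j\<in>{1..L}. \<Sum>i\<in>{1..L}. indicator {1..n i} j) = (\<Sum>i\<in>{1..L}. \<Sum>j\<in>{1..L}. (indicator {1..n i} j :: real))"
    by (rule sum.swap)
  also have "\<dots> = (\<Sum>i\<in>{1..L}. real (n i))"
  proof (rule sum.cong)
    fix i assume i: "i \<in> {1..L}"
    have "(\<Sum>j\<in>{1..L}. (indicator {1..n i} j :: real)) = (\<Sum>j\<in>{1..n i}. 1)"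
      using hn i by (intro sum.mono_neutral_cong_right) (auto simp: indicator_def)
    then show "(\<Sum>j\<in>{1..L}. (indicator {1..n i} j :: real)) = real (n i)" by simp
  qed simp
  also have "\<dots> = real (\<Sum>i\<in>{1..L}. n i)" by simp
  also have "\<dots> / real (\<Sum>i\<in>{1..L}. n i) = 1" proof -
    have Mr: "real (\<Sum>i\<in>{1..L}. n i) > 0" using Mp by (simp only: of_nat_0_less_iff)
    show ?thesis by (rule divide_self) (use Mr in linarith)
  qed
  finally have s1: "(\<Sum>j\<in>{1..L}. pstar L n j) = 1" .
  have Vs: "\<forall>i\<in>{1..L}. (\<lambda>i. {1..n i}) i \<subseteq> {1..L} \<and> card ((\<lambda>i. {1..n i}) i) = n i"
    using hn by auto
  have inP: "pstar L n \<in> Pset L n" unfolding Pset_iff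
    by (rule exI[of _ "\<lambda>i. {1..n i}"], rule conjI[OF Vs pstar_eq])
  have inC: "pstar L n \<in> conv_hull (Pset L n)"
    unfolding conv_hull_def using inP by (intro CollectI exI[of _ "{pstar L n}"] exI[of _ "\<lambda>_. 1"]) auto
  have ln2: "ln (2::real) > 0" by simp
  have ent: "entropy L (pstar L n) \<le> entropy L p" if "EE L p \<le> EE L (pstar L n)" for p
    unfolding entropy_EE using that ln2 by (simp add: divide_right_mono)
  have entE: "EE L q = EE L (pstar L n)" if "entropy L q = entropy L (pstar L n)" for q
    using that ln2 unfolding entropy_EE by (simp add: field_simps)
  show ?thesis
  proof (intro conjI)
    show "\<forall>j\<in>{1..L}. 0 \<le> pstar L n j" by (rule nn)
    show "(\<Sum>j\<in>{1..L}. pstar L n j) = 1" by (rule s1)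
    show "entropy L (pstar L n) \<in> entropy L ` Pset L n" using inP by simp
    show "\<forall>p\<in>Pset L n. entropy L (pstar L n) \<le> entropy L p"
    proof
      fix p assume "p \<in> Pset L n"
      then show "entropy L (pstar L n) \<le> entropy L p" using Pset_main[OF hn L1] ent by simp
    qed
    show "entropy L (pstar L n) \<in> entropy L ` conv_hull (Pset L n)" using inC by simp
    show "\<forall>p\<in>conv_hull (Pset L n). entropy L (pstar L n) \<le> entropy L p"
    proof
      fix p assume "p \<in> conv_hull (Pset L n)"
      then show "entropy L (pstar L n) \<le> entropy L p" using conv_main[OF hn L1] ent by simp
    qed
    show "\<forall>q\<in>conv_hull (Pset L n). entropy L q = entropy L (pstar L n) \<longrightarrow>
         (\<exists>\<sigma>. \<sigma> permutes {1..L} \<and> q = pstar L n \<circ> \<sigma>)"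
    proof (intro ballI impI)
      fix q assume "q \<in> conv_hull (Pset L n)" "entropy L q = entropy L (pstar L n)"
      then show "\<exists>\<sigma>. \<sigma> permutes {1..L} \<and> q = pstar L n \<circ> \<sigma>"
        using conv_main[OF hn L1, of q] entE[of q] by simp
    qed
  qed
qed


end
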